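(* Let $c$ be a real number with $2<c<4$. There exists $k_0(c)$ such that for all integers $k>k_0(c)$ for which $n=ck$ is an integer, the family $$\mathcal A_k(n,k)=\Big\{A\in\binom{[n]}{k}: 1\in A,\ A\cap[2,k+1]\neq\varnothing\Big\}\cup\{[2,k+1]\}$$ is intersecting and satisfies $$|\mathcal D(\mathcal A_k(n,k))|>\sum_{0\le\ell<k}\binom{n-1}{\ell}.$$
   Context: $[n]=\{1,\dots,n\}$, $[a,b]=\{a,a+1,\dots,b\}$; $\binom{[n]}{k}$ is the family of all $k$-element subsets of $[n]$. $\mathcal D(\mathcal F):=\{F\setminus F' : F,F'\in\mathcal F\}$. *)

theory Defs
  imports Complex_Main
begin

definition diff_family :: "'a set set \<Rightarrow> 'a set set" where
  "diff_family F = {A - B | A B. A \<in> F \<and> B \<in> F}"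

definition intersecting :: "'a set set \<Rightarrow> bool" where
  "intersecting F \<longleftrightarrow> (\<forall>A\<in>F. \<forall>B\<in>F. A \<inter> B \<noteq> {})"

definition fam_Ak :: "nat \<Rightarrow> nat \<Rightarrow> nat set set" where
  "fam_Ak n k = {A. A \<subseteq> {1..n} \<and> card A = k \<and> 1 \<in> A \<and> A \<inter> {2..k+1} \<noteq> {}} \<union> {{2..k+1}}"

end

theory Submission
  imports Defs
begin

lemma binom_step:
  fixes m l :: nat
  shows "(m choose Suc l) * Suc l = (m choose l) * (m - l)"
  by (metis binomial_absorb_comp Suc_times_binomial mult.commute Suc_diff_1 binomial_eq_0_iff zero_less_Suc bot_nat_0.not_eq_extremum  diff_le_self mult_0_right not_less_eq_eq diff_is_0_eq' times_binomial_minus1_eq)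

lemma binom_ratio:
  fixes q :: real and T j a :: nat
  assumes q: "0 < q" and T: "T \<le> j"
    and rat: "\<And>i. i < T \<Longrightarrow> q * (real a + real i + 1) \<le> real j - real i"
  shows "\<And>t. t \<le> T \<Longrightarrow> real ((j+a) choose (j - t)) \<ge> q^t * real ((j+a) choose j)"
proof -
  fix t assume "t \<le> T"
  then show "real ((j+a) choose (j - t)) \<ge> q^t * real ((j+a) choose j)"
  proof (induction t)
    case 0 then show ?case by simp
  next
    case (Suc i)
    have iT: "i < T" using Suc by simp
    have ij: "i < j" using iT T by simp
    have e: "((j+a) choose Suc (j - Suc i)) * Suc (j - Suc i) = ((j+a) choose (j - Suc i)) * ((j+a) - (j - Suc i))"
      by (rule binom_step)
    have e1: "Suc (j - Suc i) = j - i" using ij by simp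
    have e2: "(j+a) - (j - Suc i) = a + i + 1" using ij by simp
    have E: "real ((j+a) choose (j - i)) * (real j - real i) = real ((j+a) choose (j - Suc i)) * (real a + real i + 1)"
      using e unfolding e1 e2 using ij by (metis of_nat_diff of_nat_mult of_nat_add of_nat_1 less_imp_le)
    have IH: "q^i * real ((j+a) choose j) \<le> real ((j+a) choose (j - i))" using Suc by simp
    have pos: "real a + real i + 1 > 0" by simp
    have "q^Suc i * real ((j+a) choose j) = q * (q^i * real ((j+a) choose j))" by simp
    also have "\<dots> \<le> q * real ((j+a) choose (j - i))" using IH q by simp
    also have "\<dots> \<le> real ((j+a) choose (j - Suc i))"
    proof -
      have "q * real ((j+a) choose (j - i)) * (real a + real i + 1) = real ((j+a) choose (j - i)) * (q * (real a + real i + 1))" by simp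
      also have "\<dots> \<le> real ((j+a) choose (j - i)) * (real j - real i)"
        using rat[OF iT] by (simp add: mult_left_mono)
      also have "\<dots> = real ((j+a) choose (j - Suc i)) * (real a + real i + 1)" by (rule E)
      finally show ?thesis using pos by (simp add: mult_le_cancel_right)
    qed
    finally show ?case .
  qed
qed

lemma binom_sum_ineq:
  fixes q :: real and T j a :: nat
  assumes q: "0 < q" and T: "T \<le> j" and gs: "(\<Sum>t\<in>{1..T}. q^t) > 1"
    and rat: "\<And>i. i < T \<Longrightarrow> q * (real a + real i + 1) \<le> real j - real i"
  shows "(\<Sum>l<j. (j+a) choose l) > (j+a) choose j"
proof -
  have pos: "real ((j+a) choose j) > 0" by simp
  have "real ((j+a) choose j) < (\<Sum>t\<in>{1..T}. q^t) * real ((j+a) choose j)"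
    using gs pos by simp
  also have "\<dots> = (\<Sum>t\<in>{1..T}. q^t * real ((j+a) choose j))" by (simp add: sum_distrib_right)
  also have "\<dots> \<le> (\<Sum>t\<in>{1..T}. real ((j+a) choose (j - t)))"
    by (rule sum_mono) (rule binom_ratio[OF q T rat], auto)
  also have "\<dots> = (\<Sum>l\<in>(\<lambda>t. j - t) ` {1..T}. real ((j+a) choose l))"
  proof -
    have "inj_on (\<lambda>t. j - t) {1..T}" using T by (auto simp: inj_on_def)
    then show ?thesis by (simp add: sum.reindex)
  qed
  also have "\<dots> \<le> (\<Sum>l<j. real ((j+a) choose l))"
    by (rule sum_mono2) (use T in auto)
  finally show ?thesis by (simp flip: of_nat_sum)
qed
lemma card3: "finite X \<Longrightarrow> finite Y \<Longrightarrow> X \<inter> Y = {} \<Longrightarrow> a \<notin> X \<union> Y \<Longrightarrow> card (insert a (X \<union> Y)) = Suc (card X + card Y)"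
  by (simp add: card_Un_disjoint)

lemma card4: "finite X \<Longrightarrow> finite Y \<Longrightarrow> X \<inter> Y = {} \<Longrightarrow> a \<notin> X \<union> Y \<Longrightarrow> b \<notin> X \<union> Y \<Longrightarrow> a \<noteq> b
  \<Longrightarrow> card (insert a (insert b (X \<union> Y))) = Suc (Suc (card X + card Y))"
  by (simp add: card_Un_disjoint)

lemma memF: "A \<subseteq> {1..n} \<Longrightarrow> card A = k \<Longrightarrow> 1 \<in> A \<Longrightarrow> A \<inter> {2..k+1} \<noteq> {} \<Longrightarrow> A \<in> fam_Ak n k"
  unfolding fam_Ak_def by blast

lemma B0F: "{2..k+1} \<in> fam_Ak n k"
  unfolding fam_Ak_def by blast

lemma memD: "A \<in> F \<Longrightarrow> B \<in> F \<Longrightarrow> A - B = S \<Longrightarrow> S \<in> diff_family F"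
  unfolding diff_family_def by blast

lemma inters: "k \<ge> 1 \<Longrightarrow> intersecting (fam_Ak n k)"
  unfolding intersecting_def fam_Ak_def by auto

lemma M1:
  fixes n k :: nat
  assumes k: "k \<ge> 2" and n: "2*k+1 \<le> n"
    and S: "S \<subseteq> {2..n}" "card S < k" and nb: "\<not> (S \<subseteq> {k+2..n} \<and> card S = k - 1)"
  shows "S \<in> diff_family (fam_Ak n k)"
proof -
  define s where "s = card S"
  have fS: "finite S" using S(1) finite_subset by blast
  have "\<not> {2..k+1} \<subseteq> S"
  proof
    assume "{2..k+1} \<subseteq> S"
    then have "card {2..k+1} \<le> card S" using fS card_mono by blast
    then show False using S(2) by simp
  qed
  then obtain x where x: "x \<in> {2..k+1}" "x \<notin> S" by blast
  define U where "U = {2..n} - S - {x}"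
  have fU: "finite U" unfolding U_def by simp
  have cU: "card U = n - s - 2"
  proof -
    have "card ({2..n} - S) = n - 1 - s" using S(1) fS by (simp add: card_Diff_subset s_def)
    moreover have "x \<in> {2..n} - S" using x n by auto
    ultimately show ?thesis unfolding U_def by (simp add: card_Diff_singleton)
  qed
  have U1: "1 \<notin> U" "x \<notin> U" "U \<inter> S = {}" "U \<subseteq> {1..n}" unfolding U_def by auto
  have x1: "x \<noteq> 1" "x \<in> {1..n}" using x n by auto
  have S1: "1 \<notin> S" using S(1) by auto
  show ?thesis
  proof (cases "S \<inter> {2..k+1} = {}")
    case False
    then have s1: "s \<ge> 1" unfolding s_def using fS by (metis card_0_eq disjoint_iff empty_iff less_one not_le)
    obtain C0 where C0: "C0 \<subseteq> U" "card C0 = k - 1 - s" "finite C0"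
      using obtain_subset_with_card_n[of "k - 1 - s" U] cU n S(2) s_def by force
    define V where "V = U - C0"
    have cV: "card V = n - k - 1" unfolding V_def using C0 fU cU S(2) s_def n
      by (simp add: card_Diff_subset)
    obtain T0 where T0: "T0 \<subseteq> V" "card T0 = s - 1" "finite T0"
      using obtain_subset_with_card_n[of "s - 1" V] cV n S(2) s_def by force
    define A where "A = insert 1 (S \<union> C0)"
    define A' where "A' = insert 1 (insert x (C0 \<union> T0))"
    have SC: "S \<inter> C0 = {}" using C0 U1 by auto
    have n1: "1 \<notin> S \<union> C0" using S1 C0(1) U1 by blast
    have cA: "card A = k" unfolding A_def using card3[OF fS C0(3) SC n1] C0(2) S(2) s_def by simp
    have CT: "C0 \<inter> T0 = {}" using T0(1) unfolding V_def by blast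
    have n2: "1 \<notin> C0 \<union> T0" "x \<notin> C0 \<union> T0" using C0(1) T0(1) U1 unfolding V_def by blast+
    have cA': "card A' = k" unfolding A'_def using card4[OF C0(3) T0(3) CT n2 x1(1)[symmetric]] C0(2) T0(2) S(2) s_def s1 by simp
    have "A \<in> fam_Ak n k"
      by (rule memF) (use cA C0 U1 S False in \<open>auto simp: A_def\<close>)
    moreover have "A' \<in> fam_Ak n k"
      by (rule memF) (use cA' C0 T0 U1 x1 x V_def in \<open>auto simp: A'_def\<close>)
    moreover have "A - A' = S" unfolding A_def A'_def using C0 T0 U1 x S1 V_def by auto
    ultimately show ?thesis by (rule memD)
  next
    case True
    have "S \<subseteq> {k+2..n}"
    proof
      fix z assume z: "z \<in> S"
      then have "z \<in> {2..n}" using S(1) by blast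
      moreover have "z \<notin> {2..k+1}" using z True by blast
      ultimately show "z \<in> {k+2..n}" by simp
    qed
    then have s2: "s \<le> k - 2" using nb S(2) s_def by auto
    obtain C0 where C0: "C0 \<subseteq> U" "card C0 = k - 2 - s" "finite C0"
      using obtain_subset_with_card_n[of "k - 2 - s" U] cU n S(2) s_def by force
    define V where "V = U - C0"
    have cV: "card V = n - k" unfolding V_def using C0 fU cU S(2) s_def n s2 k
      by (simp add: card_Diff_subset)
    obtain T0 where T0: "T0 \<subseteq> V" "card T0 = s" "finite T0"
      using obtain_subset_with_card_n[of "s" V] cV n S(2) s_def by force
    define A where "A = insert 1 (insert x (S \<union> C0))"
    define A' where "A' = insert 1 (insert x (C0 \<union> T0))"
    have SC: "S \<inter> C0 = {}" using C0 U1 by auto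
    have n1: "1 \<notin> S \<union> C0" "x \<notin> S \<union> C0" using S1 C0(1) U1 x(2) by blast+
    have cA: "card A = k" unfolding A_def using card4[OF fS C0(3) SC n1 x1(1)[symmetric]] C0(2) S(2) s_def s2 k by simp
    have CT: "C0 \<inter> T0 = {}" using T0(1) unfolding V_def by blast
    have n2: "1 \<notin> C0 \<union> T0" "x \<notin> C0 \<union> T0" using C0(1) T0(1) U1 unfolding V_def by blast+
    have cA': "card A' = k" unfolding A'_def using card4[OF C0(3) T0(3) CT n2 x1(1)[symmetric]] C0(2) T0(2) S(2) s_def s2 k by simp
    have "A \<in> fam_Ak n k"
      by (rule memF) (use cA C0 U1 S x x1 in \<open>auto simp: A_def\<close>)
    moreover have "A' \<in> fam_Ak n k"
      by (rule memF) (use cA' C0 T0 U1 x1 x V_def in \<open>auto simp: A'_def\<close>)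
    moreover have "A - A' = S" unfolding A_def A'_def using C0 T0 U1 x S1 V_def by auto
    ultimately show ?thesis by (rule memD)
  qed
qed

lemma M2:
  fixes n k :: nat
  assumes k: "k \<ge> 2" and n: "2*k+1 \<le> n"
    and R: "R \<subseteq> {k+2..n}" "card R < k - 1"
  shows "insert 1 R \<in> diff_family (fam_Ak n k)"
proof -
  obtain Y where Y: "Y \<subseteq> {2..k+1}" "card Y = k - 1 - card R" "finite Y"
    using obtain_subset_with_card_n[of "k - 1 - card R" "{2..k+1}"] by force
  have fR: "finite R" using R(1) finite_subset by blast
  define A where "A = insert 1 (R \<union> Y)"
  have dj: "R \<inter> Y = {}"
  proof (rule ccontr)
    assume "R \<inter> Y \<noteq> {}"
    then obtain z where z: "z \<in> R" "z \<in> Y" by blast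
    have "z \<ge> k+2" using z(1) R(1) by auto
    moreover have "z \<le> k+1" using z(2) Y(1) by auto
    ultimately show False by linarith
  qed
  have n1: "1 \<notin> R \<union> Y" using R(1) Y(1) by auto
  have cA: "card A = k" unfolding A_def using card3[OF fR Y(3) dj n1] Y(2) R(2) k by simp
  have "Y \<noteq> {}" using Y R by auto
  then have "A \<in> fam_Ak n k"
    using cA Y R n by (intro memF) (auto simp: A_def)
  moreover have "A - {2..k+1} = insert 1 R" unfolding A_def using R Y by auto
  ultimately show ?thesis by (rule memD[OF _ B0F])
qed
lemma card_small: "finite A \<Longrightarrow> card {S. S \<subseteq> A \<and> card S < k} = (\<Sum>l<k. card A choose l)"
proof (induction k)
  case 0 then show ?case by simp
next
  case (Suc k)
  have "{S. S \<subseteq> A \<and> card S < Suc k} = {S. S \<subseteq> A \<and> card S < k} \<union> {S. S \<subseteq> A \<and> card S = k}" by auto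
  moreover have "finite {S. S \<subseteq> A \<and> card S < k}" "finite {S. S \<subseteq> A \<and> card S = k}"
    using Suc.prems by auto
  ultimately have "card {S. S \<subseteq> A \<and> card S < Suc k} = card {S. S \<subseteq> A \<and> card S < k} + card {S. S \<subseteq> A \<and> card S = k}"
    by (simp add: card_Un_disjoint disjoint_iff)
  then show ?case using Suc n_subsets by simp
qed

lemma comb:
  fixes n k :: nat
  assumes k: "k \<ge> 2" and n: "2*k+1 \<le> n"
    and ineq: "(\<Sum>l<k-1. (n-k-1) choose l) > (n-k-1) choose (k-1)"
  shows "card (diff_family (fam_Ak n k)) > (\<Sum>l<k. (n - 1) choose l)"
proof -
  define P where "P = {S. S \<subseteq> {2..n} \<and> card S < k}"
  define Bad where "Bad = {S. S \<subseteq> {k+2..n} \<and> card S = k-1}"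
  define E0 where "E0 = {R. R \<subseteq> {k+2..n} \<and> card R < k-1}"
  define D where "D = diff_family (fam_Ak n k)"
  have cP: "card P = (\<Sum>l<k. (n - 1) choose l)" unfolding P_def
    using card_small[of "{2..n}" k] by simp
  have cB: "card Bad = (n-k-1) choose (k-1)" unfolding Bad_def
    using n_subsets[of "{k+2..n}" "k-1"] by (simp add: numeral_2_eq_2)
  have cE0: "card E0 = (\<Sum>l<k-1. (n-k-1) choose l)" unfolding E0_def
    using card_small[of "{k+2..n}" "k-1"] by (simp add: numeral_2_eq_2)
  have inj: "inj_on (insert 1) E0"
  proof (rule inj_onI)
    fix x y assume "x \<in> E0" "y \<in> E0" "insert 1 x = insert 1 y"
    moreover have "1 \<notin> x" "1 \<notin> y" using \<open>x \<in> E0\<close> \<open>y \<in> E0\<close> unfolding E0_def by auto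
    ultimately show "x = y" by (metis insert_ident)
  qed
  have cEx: "card (insert 1 ` E0) = card E0" using inj by (simp add: card_image)
  have BP: "Bad \<subseteq> P" unfolding Bad_def P_def using k by auto
  have fP: "finite P" unfolding P_def by simp
  have fE: "finite (insert 1 ` E0)" unfolding E0_def by simp
  have disj: "(P - Bad) \<inter> insert 1 ` E0 = {}" unfolding P_def by auto
  have sub: "(P - Bad) \<union> insert 1 ` E0 \<subseteq> D"
  proof
    fix S assume "S \<in> (P - Bad) \<union> insert 1 ` E0"
    then show "S \<in> D"
    proof
      assume "S \<in> P - Bad"
      then show ?thesis unfolding D_def P_def Bad_def by (intro M1[OF k n]) auto
    next
      assume "S \<in> insert 1 ` E0"
      then obtain R where "S = insert 1 R" "R \<subseteq> {k+2..n}" "card R < k - 1" unfolding E0_def by auto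
      then show ?thesis unfolding D_def using M2[OF k n] by simp
    qed
  qed
  have fD: "finite D"
  proof (rule finite_subset)
    show "D \<subseteq> Pow {1..n}" unfolding D_def diff_family_def fam_Ak_def using n by auto
  qed simp
  have "card ((P - Bad) \<union> insert 1 ` E0) = card (P - Bad) + card (insert 1 ` E0)"
    using fP fE disj by (simp add: card_Un_disjoint)
  also have "card (P - Bad) = card P - card Bad" using BP fP by (simp add: card_Diff_subset finite_subset)
  finally have "card ((P - Bad) \<union> insert 1 ` E0) = card P - card Bad + card E0" using cEx by simp
  moreover have "card ((P - Bad) \<union> insert 1 ` E0) \<le> card D" using sub fD card_mono by blast
  moreover have "card Bad \<le> card P" using BP fP card_mono by blast
  ultimately show ?thesis using cP cB cE0 ineq unfolding D_def by linarith
qed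
lemma a1: fixes c k T :: real assumes "2<c" "c<4" "k > 2 * T * c / (4 - c)" shows "k * (4 - c) > 2 * T * c"
  using assms by (simp add: field_simps)
lemma a2: fixes c k T :: real assumes "2<c" "c<4" "k * (4 - c) > 2 * T * (4 - c)" shows "T * 2 < k"
proof -
  have "(T*2) * (4 - c) < k * (4 - c)" using assms by (simp add: algebra_simps)
  then show ?thesis using assms by (simp add: mult_less_cancel_right)
qed
lemma a3: fixes c k i T :: real assumes "2<c" "c<4" "k * (4 - c) > 2 * T * c" "(c + 2) * (i + 1) \<le> 2 * c * T"
  shows "2 * (c * k - 2 * k + i + 1) \<le> c * (k - 1 - i)"
  using assms by (simp add: algebra_simps)
lemma a4: fixes c k i :: real assumes "2<c" "2 * (c * k - 2 * k + i + 1) \<le> c * (k - 1 - i)"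
  shows "(2/c) * (c * k - 2 * k + i + 1) \<le> k - 1 - i"
proof -
  have "(2/c) * (c * k - 2 * k + i + 1) = (2 * (c * k - 2 * k + i + 1)) / c" by simp
  also have "\<dots> \<le> (c * (k - 1 - i)) / c" using assms by (intro divide_right_mono) auto
  also have "\<dots> = k - 1 - i" using assms by simp
  finally show ?thesis .
qed
lemma geo_T:
  fixes q :: real assumes "1/2 < q" "q < 1"
  shows "\<exists>T. (\<Sum>t\<in>{1..T}. q^t) > 1"
proof -
  obtain T where T: "q^T < 2*q - 1" using real_arch_pow_inv[of "2*q-1" q] assms by auto
  have s: "(\<Sum>t\<in>{1..T}. q^t) = q * ((1 - q^T) / (1 - q))"
    using assms by (simp add: sum.atLeast1_atMost_eq sum_distrib_left[symmetric] sum_gp_strict)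
  have "q * q^T \<le> q^T" using assms by (simp add: mult_left_le_one_le)
  then have "q * (1 - q^T) > 1 - q" using T by (simp add: algebra_simps)
  then have "q * ((1 - q^T) / (1 - q)) > 1" using assms by (simp add: field_simps)
  then have "(\<Sum>t\<in>{1..T}. q^t) > 1" using s by simp
  then show ?thesis by blast
qed

theorem mainTheorem10:
  fixes c :: real
  assumes "2 < c" and "c < 4"
  shows "\<exists>k0::nat. \<forall>k n::nat. k > k0 \<longrightarrow> real n = c * real k \<longrightarrow>
           intersecting (fam_Ak n k) \<and>
           card (diff_family (fam_Ak n k)) > (\<Sum>l<k. (n - 1) choose l)"
proof -
  define q where "q = 2 / c"
  have q: "1/2 < q" "q < 1" "0 < q" using assms by (auto simp: q_def field_simps)
  obtain T where T: "(\<Sum>t\<in>{1..T}. q^t) > 1" using geo_T[OF q(1,2)] by blast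
  define k0 where "k0 = nat \<lceil>2 * real T * c / (4 - c)\<rceil> + 2"
  show ?thesis
  proof (intro exI[of _ k0] allI impI conjI)
    fix k n :: nat assume kk: "k > k0" and nk: "real n = c * real k"
    have k2: "k \<ge> 2" using kk k0_def by simp
    then show "intersecting (fam_Ak n k)" by (intro inters) simp
    have "real k > 2 * real T * c / (4 - c)" using kk unfolding k0_def by linarith
    then have kb: "real k * (4 - c) > 2 * real T * c" using assms by (rule a1[rotated 2])
    have "real n > 2 * real k" unfolding nk using assms k2 by (intro mult_strict_right_mono) auto
    then have n: "2*k+1 \<le> n" by linarith
    have TT: "real T * 2 < real k"
    proof -
      have "2 * real T * (4 - c) \<le> 2 * real T * c" using assms by (intro mult_left_mono) auto
      then have "real k * (4 - c) > 2 * real T * (4 - c)" using kb by linarith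
      then show ?thesis using assms by (intro a2[of c]) auto
    qed
    have Tj: "T \<le> k - 1" using TT by linarith
    have rat: "q * (real (n - 2*k) + real i + 1) \<le> real (k - 1) - real i" if "i < T" for i
    proof -
      have e1: "real (n - 2*k) = c * real k - 2 * real k" using n nk by (simp add: of_nat_diff)
      have e2: "real (k - 1) = real k - 1" using k2 by (simp add: of_nat_diff)
      have i1: "real i + 1 \<le> real T" using that by linarith
      have "(c + 2) * (real i + 1) \<le> 2 * c * real T"
      proof -
        have "(c + 2) * (real i + 1) \<le> (c+2) * real T" using i1 assms by (intro mult_left_mono) auto
        also have "\<dots> \<le> 2 * c * real T" using assms by (intro mult_right_mono) auto
        finally show ?thesis .
      qed
      then have key: "2 * (c * real k - 2 * real k + real i + 1) \<le> c * (real k - 1 - real i)"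
        using kb assms by (intro a3) auto
      have "q * (c * real k - 2 * real k + real i + 1) \<le> real k - 1 - real i"
        using key assms unfolding q_def by (intro a4) auto
      then show ?thesis using e1 e2 by simp
    qed
    have ineq0: "(\<Sum>l<k-1. ((k-1)+(n-2*k)) choose l) > ((k-1)+(n-2*k)) choose (k-1)"
      by (rule binom_sum_ineq[OF q(3) Tj T rat])
    have "(k-1)+(n-2*k) = n-k-1" using n k2 by simp
    then show "card (diff_family (fam_Ak n k)) > (\<Sum>l<k. (n - 1) choose l)"
      using comb[OF k2 n] ineq0 by simp
  qed
qed

end
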